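(* For every integer $n\ge 0$, \[ \sum_{j=0}^{n} \frac{q^{2j}(q;q)_{n+j}}{(q^2;q^2)_j}=(q;q^2)_{n+1}+q^{n+1}(q^2;q^2)_n . \]
   Context: $(a;q)_0:=1$ and $(a;q)_n:=(1-a)(1-aq)\cdots(1-aq^{n-1})$ for $n\ge1$. *)

theory Defs
  imports Main
begin

definition qpoch :: "'a::comm_ring_1 \<Rightarrow> 'a \<Rightarrow> nat \<Rightarrow> 'a" where
  "qpoch a q n = (\<Prod>k<n. (1 - a * q ^ k))"

end

theory Submission
  imports Defs
begin

lemma qp_Suc: "qpoch a q (Suc n) = qpoch a q n * (1 - a * q^n)"
  by (simp add: qpoch_def)

lemma qp0: "qpoch a q 0 = 1"
  by (simp add: qpoch_def)

lemma P_Suc: "qpoch (q::'a::field) q (Suc n) = qpoch q q n * (1 - q^(Suc n))"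
  by (simp add: qp_Suc)

lemma D_Suc: "qpoch ((q::'a::field)^2) (q^2) (Suc n) = qpoch (q^2) (q^2) n * (1 - q^(2*n+2))"
  by (simp add: qp_Suc power_mult[symmetric] power_add[symmetric])

lemma oddprod: "qpoch (q::'a::field) (q^2) (n+1) * qpoch (q^2) (q^2) n = qpoch q q (2*n+1)"
proof (induction n)
  case 0
  then show ?case by (simp add: qp0 qp_Suc)
next
  case (Suc n)
  have x: "q * (q^2)^(n+1) = q^(2*n+3)"
  proof -
    have "q * (q^2)^(n+1) = q^(1 + (2*(n+1)))" by (simp add: power_add power_mult power2_eq_square)
    also have "1 + 2*(n+1) = 2*n+3" by simp
    finally show ?thesis .
  qed
  have A: "qpoch q (q^2) (Suc n+1) = qpoch q (q^2) (n+1) * (1 - q^(2*n+3))"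
    using qp_Suc[of q "q^2" "n+1"] x by simp
  have B: "qpoch q q (2*Suc n+1) = qpoch q q (2*n+1) * (1 - q^(2*n+2)) * (1 - q^(2*n+3))"
    using P_Suc[of q "2*n+1"] P_Suc[of q "2*n+2"] by (simp add: numeral_3_eq_3)
  have "qpoch q (q^2) (Suc n+1) * qpoch (q^2) (q^2) (Suc n)
     = (qpoch q (q^2) (n+1) * qpoch (q^2) (q^2) n) * (1 - q^(2*n+2)) * (1 - q^(2*n+3))"
    unfolding A D_Suc by (simp only: mult_ac)
  also have "... = qpoch q q (2*Suc n+1)"
    unfolding B Suc.IH ..
  finally show ?case .
qed

lemma lemA:
  fixes q :: "'a::field"
  assumes "\<forall>j\<le>m. qpoch (q^2) (q^2) j \<noteq> 0"
  shows "(\<Sum>j=0..m. (q^(2*j) - q^(n+1+j)) * qpoch q q (n+j) / qpoch (q^2) (q^2) j)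
         = qpoch q q (n+m+1) / qpoch (q^2) (q^2) m"
  using assms
proof (induction m)
  case 0
  then show ?case using P_Suc[of q n] by (simp add: qp0 algebra_simps)
next
  case (Suc m)
  let ?D = "qpoch (q^2) (q^2)" and ?P = "qpoch q q"
  have d1: "?D (Suc m) \<noteq> 0" using Suc.prems by auto
  have d0: "?D m \<noteq> 0" using Suc.prems by auto
  have e: "?D (Suc m) = ?D m * (1 - q^(2*m+2))" by (rule D_Suc)
  have f: "1 - q^(2*m+2) \<noteq> 0" using d1 e by auto
  have IH: "(\<Sum>j=0..m. (q^(2*j) - q^(n+1+j)) * ?P (n+j) / ?D j) = ?P (n+m+1) / ?D m"
    using Suc by auto
  have p: "?P (n+Suc m+1) = ?P (n+m+1) * (1 - q^(n+m+2))"
    using P_Suc[of q "n+m+1"] by simp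
  have "(\<Sum>j=0..Suc m. (q^(2*j) - q^(n+1+j)) * ?P (n+j) / ?D j)
     = ?P (n+m+1) / ?D m + (q^(2*m+2) - q^(n+m+2)) * ?P (n+m+1) / (?D m * (1 - q^(2*m+2)))"
    using IH e by (simp add: algebra_simps)
  also have "... = ?P (n+m+1) * (1 - q^(n+m+2)) / (?D m * (1 - q^(2*m+2)))"
    using d0 f by (simp add: field_simps)
  also have "... = ?P (n+Suc m+1) / ?D (Suc m)" using p e by simp
  finally show ?case .
qed

definition VV :: "'a::field \<Rightarrow> nat \<Rightarrow> 'a" where
  "VV q n = (\<Sum>j=0..n. q^j * qpoch q q (n+j) / qpoch (q^2) (q^2) j)"

definition SS :: "'a::field \<Rightarrow> nat \<Rightarrow> 'a" where
  "SS q n = (\<Sum>j=0..n. q^(2*j) * qpoch q q (n+j) / qpoch (q^2) (q^2) j)"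

lemma SV:
  fixes q :: "'a::field"
  assumes "\<forall>j\<le>n. qpoch (q^2) (q^2) j \<noteq> 0"
  shows "SS q n = qpoch q q (2*n+1) / qpoch (q^2) (q^2) n + q^(n+1) * VV q n"
proof -
  have "SS q n = (\<Sum>j=0..n. (q^(2*j) - q^(n+1+j)) * qpoch q q (n+j) / qpoch (q^2) (q^2) j)
     + q^(n+1) * VV q n"
    unfolding SS_def VV_def
    by (simp add: sum_distrib_left sum.distrib[symmetric] algebra_simps power_add diff_divide_distrib)
  also have "... = qpoch q q (2*n+1) / qpoch (q^2) (q^2) n + q^(n+1) * VV q n"
    using lemA[OF assms, of n] by (simp add: mult_2)
  finally show ?thesis .
qed

lemma gen:
  fixes D c a V P :: "'a::field"
  assumes "D \<noteq> 0" "1 - a*a \<noteq> 0"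
  shows "V + a*P/(D*(1 - a*a)) - a*(P/D + a*V + a*a*P/(D*(1 - a*a))) = V*(1-a*a)"
proof -
  have "a*P/(D*(1 - a*a)) - a*(P/D) - a*a*a*P/(D*(1 - a*a)) = 0"
    using assms by (simp add: field_simps)
  then show ?thesis by (simp add: algebra_simps)
qed

lemma VSuc:
  fixes q :: "'a::field"
  assumes "\<forall>j\<le>Suc n. qpoch (q^2) (q^2) j \<noteq> 0"
  shows "VV q (Suc n) = VV q n * (1 - q^(2*n+2))"
proof -
  let ?D = "qpoch (q^2) (q^2)" and ?P = "qpoch q q"
  have d1: "?D (Suc n) \<noteq> 0" using assms by auto
  have d0: "?D n \<noteq> 0" using assms by auto
  have e: "?D (Suc n) = ?D n * (1 - q^(2*n+2))" by (rule D_Suc)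
  have f: "1 - q^(2*n+2) \<noteq> 0" using d1 e by auto
  have a: "\<forall>j\<le>n. ?D j \<noteq> 0" using assms by auto
  have "VV q (Suc n) = (\<Sum>j=0..Suc n. q^j * ?P (n+j) / ?D j)
       - q^(n+1) * (\<Sum>j=0..Suc n. q^(2*j) * ?P (n+j) / ?D j)"
  proof -
    have t: "q^j * ?P (Suc n+j) / ?D j = q^j * ?P (n+j) / ?D j - q^(n+1) * (q^(2*j) * ?P (n+j) / ?D j)" for j
    proof -
      have "?P (Suc n+j) = ?P (n+j) * (1 - q^(n+1+j))" using P_Suc[of q "n+j"] by simp
      moreover have "q^j * q^(n+1+j) = q^(n+1) * q^(2*j)"
      proof -
        have e: "j + (n+1+j) = (n+1) + 2*j" by simp
        have "q^j * q^(n+1+j) = q^(j+(n+1+j))" by (simp only: power_add)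
        also have "... = q^((n+1)+2*j)" by (simp only: e)
        also have "... = q^(n+1) * q^(2*j)" by (simp only: power_add)
        finally show ?thesis .
      qed
      ultimately show ?thesis by (simp add: diff_divide_distrib right_diff_distrib mult_ac)
           (metis (no_types, lifting) mult.left_commute)
    qed
    show ?thesis unfolding VV_def t sum_subtractf sum_distrib_left ..
  qed
  also have "... = VV q n + q^(n+1) * ?P (2*n+1) / ?D (Suc n)
       - q^(n+1) * (SS q n + q^(2*n+2) * ?P (2*n+1) / ?D (Suc n))"
  proof -
    have s1: "(\<Sum>j=0..Suc n. q^j * ?P (n+j) / ?D j) = VV q n + q^(n+1) * ?P (2*n+1) / ?D (Suc n)"
      unfolding VV_def by (simp add: mult_2)
    have s2: "(\<Sum>j=0..Suc n. q^(2*j) * ?P (n+j) / ?D j) = SS q n + q^(2*n+2) * ?P (2*n+1) / ?D (Suc n)"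
      unfolding SS_def by (simp add: mult_2)
    show ?thesis unfolding s1 s2 ..
  qed
  also have "... = VV q n + q^(n+1) * ?P (2*n+1) / ?D (Suc n)
       - q^(n+1) * (?P (2*n+1) / ?D n + q^(n+1) * VV q n + q^(2*n+2) * ?P (2*n+1) / ?D (Suc n))"
    using SV[OF a] by simp
  also have "... = VV q n * (1 - q^(2*n+2))"
  proof -
    have qq: "q^(2*n+2) = q^(n+1) * q^(n+1)" by (simp add: power_add[symmetric] mult_2)
    have f': "1 - q^(n+1) * q^(n+1) \<noteq> 0" using f unfolding qq .
    show ?thesis unfolding e qq by (rule gen[OF d0 f'])
  qed
  finally show ?thesis .
qed

lemma Vclosed:
  fixes q :: "'a::field"
  assumes "\<forall>j\<le>n. qpoch (q^2) (q^2) j \<noteq> 0"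
  shows "VV q n = qpoch (q^2) (q^2) n"
  using assms
proof (induction n)
  case 0
  then show ?case by (simp add: VV_def qp0)
next
  case (Suc n)
  then show ?case using VSuc[OF Suc.prems] D_Suc[of q n] by simp
qed

theorem lemma3p4:
  fixes q :: "'a::field" and n :: nat
  assumes "\<forall>j\<le>n. qpoch (q^2) (q^2) j \<noteq> 0"
  shows "(\<Sum>j=0..n. q^(2*j) * qpoch q q (n+j) / qpoch (q^2) (q^2) j)
         = qpoch q (q^2) (n+1) + q^(n+1) * qpoch (q^2) (q^2) n"
proof -
  have d0: "qpoch (q^2) (q^2) n \<noteq> 0" using assms by auto
  have "qpoch q q (2*n+1) / qpoch (q^2) (q^2) n = qpoch q (q^2) (n+1)"
    using oddprod[of q n] d0 by (simp add: field_simps)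
  then show ?thesis using SV[OF assms] Vclosed[OF assms] unfolding SS_def by simp
qed

end
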